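(* Let $(G,\alpha)$ be a finite Hom-group and $H\preceq G$. Then $|H|$ divides $|G|$.
   Context: A Hom-group is a tuple $(G,\mu,1,\alpha)$ where $G$ is a set, $\mu:G\times G\to G$ is a binary operation written $\mu(g,h)=gh$, $1\in G$ is a distinguished element, and $\alpha:G\to G$ is a bijection, such that: (1) Hom-associativity: $\alpha(g)(hk)=(gh)\alpha(k)$ for all $g,h,k\in G$; (2) $\alpha(gk)=\alpha(g)\alpha(k)$ for all $g,k$; (3) Hom-unitality: $g1=1g=\alpha(g)$ for all $g$, and $\alpha(1)=1$; (4) for every $g\in G$ there exists $g^{-1}\in G$ with $gg^{-1}=g^{-1}g=1$ (such an inverse is unique). A Hom-subgroup of $(G,\alpha)$ is a subset $H\subseteq G$ such that $H$, with the restriction of the multiplication of $G$, the element $1$, and the restriction of $\alpha$, is itself a Hom-group (in particular $1\in H$, $H$ is closed under multiplication and inverses, and $\alpha$ restricts to a bijection $H\to H$). We write $H\preceq G$. *)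

theory Defs
  imports Main
begin

definition hom_group :: "'a set \<Rightarrow> ('a \<Rightarrow> 'a \<Rightarrow> 'a) \<Rightarrow> 'a \<Rightarrow> ('a \<Rightarrow> 'a) \<Rightarrow> bool" where
  "hom_group G mult one alpha \<longleftrightarrow>
     (\<forall>g\<in>G. \<forall>h\<in>G. mult g h \<in> G) \<and>
     one \<in> G \<and>
     bij_betw alpha G G \<and>
     (\<forall>g\<in>G. \<forall>h\<in>G. \<forall>k\<in>G. mult (alpha g) (mult h k) = mult (mult g h) (alpha k)) \<and>
     (\<forall>g\<in>G. \<forall>k\<in>G. alpha (mult g k) = mult (alpha g) (alpha k)) \<and>
     (\<forall>g\<in>G. mult g one = alpha g \<and> mult one g = alpha g) \<and>
     alpha one = one \<and>
     (\<forall>g\<in>G. \<exists>h\<in>G. mult g h = one \<and> mult h g = one)"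

definition hom_subgroup :: "'a set \<Rightarrow> 'a set \<Rightarrow> ('a \<Rightarrow> 'a \<Rightarrow> 'a) \<Rightarrow> 'a \<Rightarrow> ('a \<Rightarrow> 'a) \<Rightarrow> bool" where
  "hom_subgroup H G mult one alpha \<longleftrightarrow> H \<subseteq> G \<and> hom_group H mult one alpha"

end

theory Submission
  imports Defs "HOL-Algebra.Coset"
begin

theorem mainTheorem9:
  fixes G H :: "'a set" and mult :: "'a \<Rightarrow> 'a \<Rightarrow> 'a" and one :: 'a and alpha :: "'a \<Rightarrow> 'a"
  assumes "hom_group G mult one alpha"
    and "finite G"
    and "hom_subgroup H G mult one alpha"
  shows "card H dvd card G"
proof -
  define b where "b = inv_into G alpha"
  have cl: "\<And>g h. g \<in> G \<Longrightarrow> h \<in> G \<Longrightarrow> mult g h \<in> G" and oneG: "one \<in> G"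
    and bij: "bij_betw alpha G G"
    and hass: "\<And>g h k. g \<in> G \<Longrightarrow> h \<in> G \<Longrightarrow> k \<in> G \<Longrightarrow> mult (alpha g) (mult h k) = mult (mult g h) (alpha k)"
    and amul: "\<And>g k. g \<in> G \<Longrightarrow> k \<in> G \<Longrightarrow> alpha (mult g k) = mult (alpha g) (alpha k)"
    and unit: "\<And>g. g \<in> G \<Longrightarrow> mult g one = alpha g \<and> mult one g = alpha g"
    and a1: "alpha one = one"
    and inv: "\<And>g. g \<in> G \<Longrightarrow> \<exists>h\<in>G. mult g h = one \<and> mult h g = one"
    using assms(1) unfolding hom_group_def by blast+
  have HG: "H \<subseteq> G" and hg: "hom_group H mult one alpha"
    using assms(3) unfolding hom_subgroup_def by auto
  have clH: "\<And>g h. g \<in> H \<Longrightarrow> h \<in> H \<Longrightarrow> mult g h \<in> H" and oneH: "one \<in> H"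
    and bijH: "bij_betw alpha H H"
    and invH: "\<And>g. g \<in> H \<Longrightarrow> \<exists>h\<in>H. mult g h = one \<and> mult h g = one"
    using hg unfolding hom_group_def by blast+
  have inj: "inj_on alpha G" and surj: "alpha ` G = G" using bij by (auto simp: bij_betw_def)
  have bG: "\<And>x. x \<in> G \<Longrightarrow> b x \<in> G" unfolding b_def using surj by (metis inv_into_into)
  have ab: "\<And>x. x \<in> G \<Longrightarrow> alpha (b x) = x" unfolding b_def using surj by (simp add: f_inv_into_f)
  have ba: "\<And>x. x \<in> G \<Longrightarrow> b (alpha x) = x" unfolding b_def using inj by simp
  have aG: "\<And>x. x \<in> G \<Longrightarrow> alpha x \<in> G" using surj by auto
  have bmul: "\<And>x y. x \<in> G \<Longrightarrow> y \<in> G \<Longrightarrow> b (mult x y) = mult (b x) (b y)"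
  proof -
    fix x y assume x: "x \<in> G" and y: "y \<in> G"
    have "alpha (mult (b x) (b y)) = mult x y" using amul[OF bG[OF x] bG[OF y]] ab x y by simp
    then show "b (mult x y) = mult (b x) (b y)" using ba cl bG x y by metis
  qed
  have b1: "b one = one" using ba[OF oneG] a1 by simp
  define M where "M = \<lparr>carrier = G, monoid.mult = (\<lambda>x y. b (mult x y)), one = one\<rparr>"
  have grp: "group M"
  proof (rule groupI)
    show "\<And>x y. x \<in> carrier M \<Longrightarrow> y \<in> carrier M \<Longrightarrow> x \<otimes>\<^bsub>M\<^esub> y \<in> carrier M"
      by (simp add: M_def bG cl)
    show "\<one>\<^bsub>M\<^esub> \<in> carrier M" by (simp add: M_def oneG)
    show "\<And>x y z. x \<in> carrier M \<Longrightarrow> y \<in> carrier M \<Longrightarrow> z \<in> carrier M \<Longrightarrow>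
      x \<otimes>\<^bsub>M\<^esub> y \<otimes>\<^bsub>M\<^esub> z = x \<otimes>\<^bsub>M\<^esub> (y \<otimes>\<^bsub>M\<^esub> z)"
    proof -
      fix x y z assume "x \<in> carrier M" "y \<in> carrier M" "z \<in> carrier M"
      hence x: "x \<in> G" and y: "y \<in> G" and z: "z \<in> G" by (auto simp: M_def)
      have "mult (b (mult x y)) z = mult (mult (b x) (b y)) (alpha (b z))"
        using bmul x y ab z by simp
      also have "\<dots> = mult (alpha (b x)) (mult (b y) (b z))" using hass bG x y z by simp
      also have "\<dots> = mult x (b (mult y z))" using ab x bmul y z by simp
      finally show "x \<otimes>\<^bsub>M\<^esub> y \<otimes>\<^bsub>M\<^esub> z = x \<otimes>\<^bsub>M\<^esub> (y \<otimes>\<^bsub>M\<^esub> z)"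
        by (simp add: M_def)
    qed
    show "\<And>x. x \<in> carrier M \<Longrightarrow> \<one>\<^bsub>M\<^esub> \<otimes>\<^bsub>M\<^esub> x = x"
      by (simp add: M_def unit ba)
    show "\<And>x. x \<in> carrier M \<Longrightarrow> \<exists>y\<in>carrier M. y \<otimes>\<^bsub>M\<^esub> x = \<one>\<^bsub>M\<^esub>"
    proof -
      fix x assume "x \<in> carrier M"
      hence x: "x \<in> G" by (simp add: M_def)
      then obtain h where "h \<in> G" "mult h x = one" using inv by blast
      thus "\<exists>y\<in>carrier M. y \<otimes>\<^bsub>M\<^esub> x = \<one>\<^bsub>M\<^esub>" using b1 by (auto simp: M_def)
    qed
  qed
  have sub: "subgroup H M"
  proof (rule group.subgroupI[OF grp])
    show "H \<subseteq> carrier M" using HG by (simp add: M_def)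
    show "H \<noteq> {}" using oneH by auto
    show "\<And>a c. a \<in> H \<Longrightarrow> c \<in> H \<Longrightarrow> a \<otimes>\<^bsub>M\<^esub> c \<in> H"
    proof -
      fix a c assume a: "a \<in> H" and c: "c \<in> H"
      have "mult a c \<in> H" using clH a c .
      then obtain z where z: "z \<in> H" "alpha z = mult a c" using bijH by (metis bij_betw_def imageE)
      have "z \<in> G" using z HG by auto
      hence "b (mult a c) = z" using z(2) ba by metis
      thus "a \<otimes>\<^bsub>M\<^esub> c \<in> H" using z by (simp add: M_def)
    qed
    show "\<And>a. a \<in> H \<Longrightarrow> inv\<^bsub>M\<^esub> a \<in> H"
    proof -
      fix a assume a: "a \<in> H"
      then obtain h where h: "h \<in> H" "mult h a = one" using invH by blast
      have "h \<otimes>\<^bsub>M\<^esub> a = \<one>\<^bsub>M\<^esub>" using h b1 by (simp add: M_def)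
      hence "inv\<^bsub>M\<^esub> a = h" using group.inv_equality[OF grp] a h HG by (auto simp: M_def)
      thus "inv\<^bsub>M\<^esub> a \<in> H" using h by simp
    qed
  qed
  have "card (rcosets\<^bsub>M\<^esub> H) * card H = order M" using group.lagrange[OF grp sub] .
  hence "card (rcosets\<^bsub>M\<^esub> H) * card H = card G" by (simp add: order_def M_def)
  thus ?thesis by (metis dvd_triv_right)
qed

end
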